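(* Let $G$ be a finite group, let $K$ be a normal solvable subgroup of $G$, and let $p \in \pi(G)$. If $d_G(p) < |L(p,G)|$, then $p \notin \pi(K)$.
   Context: For a finite group $X$, $\pi(X)$ is the set of prime divisors of $|X|$. The prime graph $GK(G)$ of $G$ has vertex set $\pi(G)$, with distinct vertices $p,q$ adjacent iff $G$ contains an element of order $pq$; $d_G(p)$ denotes the degree of the vertex $p$ in $GK(G)$. For $p \in \pi(G)$, $w_G(p) = \max\{ i : p^i \mid |G|\}$. For a positive integer $m$, $[m] = \operatorname{lcm}(1,2,\dots,m)$. For $p\in\pi(G)$, define $$L(p,G) = \{ q \in \pi(G)\setminus\{p\} \;:\; p \nmid q^{n}-1 \text{ and } q \nmid p^{\gcd([m],\,q-1)}-1, \text{ where } m = w_G(p),\ n = w_G(q)\}.$$ *)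

theory Defs
  imports "HOL-Algebra.Algebra" "HOL-Computational_Algebra.Primes"
begin

definition prime_set :: "('a, 'b) monoid_scheme \<Rightarrow> nat set" where
  "prime_set H = {p. Factorial_Ring.prime p \<and> p dvd card (carrier H)}"

definition gk_adj :: "('a, 'b) monoid_scheme \<Rightarrow> nat \<Rightarrow> nat \<Rightarrow> bool" where
  "gk_adj G p q \<longleftrightarrow> p \<in> prime_set G \<and> q \<in> prime_set G \<and> p \<noteq> q \<and>
     (\<exists>x \<in> carrier G. group.ord G x = p * q)"

definition gk_deg :: "('a, 'b) monoid_scheme \<Rightarrow> nat \<Rightarrow> nat" where
  "gk_deg G p = card {q. gk_adj G p q}"

definition w_exp :: "('a, 'b) monoid_scheme \<Rightarrow> nat \<Rightarrow> nat" where
  "w_exp G p = multiplicity p (card (carrier G))"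

definition lcm_upto :: "nat \<Rightarrow> nat" where
  "lcm_upto m = Lcm {1..m}"

definition L_set :: "nat \<Rightarrow> ('a, 'b) monoid_scheme \<Rightarrow> nat set" where
  "L_set p G = {q \<in> prime_set G - {p}.
      \<not> p dvd (q ^ w_exp G q - 1) \<and>
      \<not> q dvd (p ^ gcd (lcm_upto (w_exp G p)) (q - 1) - 1)}"

end

theory Submission
  imports Defs "HOL-Number_Theory.Residues"
begin

lemma funpow_fix: "g z = z \<Longrightarrow> (g ^^ n) z = z"
  by (induction n) auto

lemma funpow_mod:
  assumes "(f ^^ q) x = x"
  shows "(f ^^ n) x = (f ^^ (n mod q)) x"
proof -
  have "(f ^^ (q * k)) x = x" for k
    using funpow_fix[of "f ^^ q" x k] assms by (simp add: funpow_mult)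
  moreover have "n = n mod q + q * (n div q)" by simp
  ultimately show ?thesis
    by (metis comp_apply funpow_add)
qed

lemma fixpt_count:
  fixes f :: "'a \<Rightarrow> 'a" and q :: nat
  assumes "finite Y" "f ` Y \<subseteq> Y" "Factorial_Ring.prime q" "\<forall>x\<in>Y. (f^^q) x = x" "\<forall>x\<in>Y. f x \<noteq> x"
  shows "q dvd card Y"
  using assms
proof (induction Y rule: finite_psubset_induct)
  case (psubset Y)
  show ?case
  proof (cases "Y = {}")
    case True then show ?thesis by simp
  next
    case False
    then obtain x where x: "x \<in> Y" by blast
    have inX: "(f ^^ i) z \<in> Y" if "z \<in> Y" for i z
      using that psubset.prems(1) by (induction i) auto
    define Orb where "Orb = (\<lambda>i. (f ^^ i) x) ` {..<q}"
    have q0: "q > 0" using psubset.prems(2) prime_gt_0_nat by blast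
    have inj: "inj_on (\<lambda>i. (f ^^ i) x) {..<q}"
    proof (rule ccontr)
      assume "\<not> ?thesis"
      then obtain i j where ij: "i < j" "j < q" "(f ^^ i) x = (f ^^ j) x"
        unfolding inj_on_def by (metis lessThan_iff nat_neq_iff)
      define z where "z = (f ^^ i) x"
      have zX: "z \<in> Y" using inX x z_def by blast
      have "(f ^^ (j - i)) z = (f ^^ (j - i + i)) x" unfolding z_def by (simp add: funpow_add)
      also have "\<dots> = z" using ij z_def by simp
      finally have d: "(f ^^ (j - i)) z = z" .
      have "\<not> q dvd (j - i)" using ij by (auto dest: dvd_imp_le)
      then have cop: "coprime (j - i) q"
        using prime_imp_coprime[OF psubset.prems(2)] coprime_commute by blast
      obtain a b where ab: "(j - i) * a = q * b + gcd (j - i) q"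
        using bezout_nat[of "j - i" q] ij by auto
      have "gcd (j - i) q = 1" using cop by simp
      with ab have ab': "(j - i) * a = q * b + 1" by simp
      have "(f ^^ ((j - i) * a)) z = z"
        using funpow_fix[of "f ^^ (j - i)" z a] d by (simp add: funpow_mult)
      moreover have "(f ^^ (q * b)) z = z"
        using funpow_fix[of "f ^^ q" z b] psubset.prems(3) zX by (simp add: funpow_mult)
      moreover have "(f ^^ (q * b + 1)) z = f ((f ^^ (q * b)) z)" by simp
      ultimately have "f z = z"
        using ab' by metis
      then show False using psubset.prems(4) zX by blast
    qed
    have cardO: "card Orb = q" unfolding Orb_def using card_image[OF inj] by simp
    have OX: "Orb \<subseteq> Y" unfolding Orb_def using inX x by blast
    have bk: "z \<in> Orb" if h1: "z \<in> Y" and h2: "f z \<in> Orb" for z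
    proof -
      obtain i where i: "i < q" "f z = (f ^^ i) x" using h2 unfolding Orb_def by blast
      have "z = (f ^^ q) z" using psubset.prems(3) h1 by simp
      also have "\<dots> = (f ^^ (q - 1)) (f z)"
        using q0 by (metis Suc_diff_1 comp_apply funpow_Suc_right)
      also have "\<dots> = (f ^^ (q - 1 + i)) x" using i by (simp only: funpow_add comp_apply)
      also have "\<dots> = (f ^^ ((q - 1 + i) mod q)) x"
        using funpow_mod psubset.prems(3) x by metis
      finally show ?thesis unfolding Orb_def using q0 by auto
    qed
    have sub: "Y - Orb \<subset> Y" using x OX unfolding Orb_def using q0 by auto
    have "q dvd card (Y - Orb)"
      apply (rule psubset.IH[OF sub])
      using psubset.prems bk by auto
    moreover have "card Y = card (Y - Orb) + card Orb"
      using OX psubset.hyps by (metis card_Diff_subset card_mono diff_add_inverse2 finite_subset le_add_diff_inverse2)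
    ultimately show ?thesis using cardO by simp
  qed
qed


lemma (in group) ord_sub:
  assumes "subgroup H G"
  shows "group.ord (G\<lparr>carrier := H\<rparr>) h = ord h"
  unfolding ord_def group.ord_def[OF subgroup_imp_group[OF assms]] by (simp flip: nat_pow_consistent)

lemma (in group) ord_dvd_card_sub:
  assumes "subgroup H G" "finite H" "h \<in> H"
  shows "ord h dvd card H"
proof -
  interpret Hg: group "G\<lparr>carrier := H\<rparr>" using subgroup_imp_group[OF assms(1)] .
  have "Hg.ord h dvd order (G\<lparr>carrier := H\<rparr>)"
    using Hg.ord_dvd_group_order assms(3) by simp
  then show ?thesis using ord_sub[OF assms(1)] by (simp add: order_def)
qed

lemma (in group) cauchy_elem:
  assumes fin: "finite (carrier G)" and t: "Factorial_Ring.prime t" and dv: "t dvd order G"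
  shows "\<exists>y\<in>carrier G. ord y = t"
proof -
  obtain m where m: "order G = t ^ 1 * m" using dv by (auto simp: dvd_def)
  obtain H where H: "subgroup H G" "card H = t ^ 1"
    using sylow_thm[OF t group_axioms m fin] by blast
  have fH: "finite H" using H(1) fin subgroup.subset finite_subset by blast
  have "card H \<ge> 2" using H(2) t prime_ge_2_nat by simp
  have "\<not> H \<subseteq> {\<one>}"
  proof
    assume "H \<subseteq> {\<one>}"
    then have "card H \<le> card {\<one>}" by (rule card_mono[rotated]) simp
    with \<open>card H \<ge> 2\<close> show False by simp
  qed
  then obtain h where h: "h \<in> H" "h \<noteq> \<one>" by blast
  have hc: "h \<in> carrier G" using subgroup.mem_carrier[OF H(1) h(1)] .
  have "ord h dvd t" using ord_dvd_card_sub[OF H(1) fH h(1)] H(2) by simp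
  moreover have "ord h \<noteq> 1" using ord_eq_1[OF hc] h(2) by simp
  ultimately have "ord h = t" using t prime_nat_iff by auto
  then show ?thesis using hc by blast
qed

lemma (in group) ord_pow_dvd:
  assumes "w \<in> carrier G"
  shows "ord (w [^] (k::nat)) dvd ord w"
proof -
  have "(w [^] k) [^] ord w = w [^] (k * ord w)" using assms by (simp add: nat_pow_pow)
  also have "\<dots> = \<one>" using pow_eq_id[OF assms] by simp
  finally have "(w [^] k) [^] ord w = \<one>" .
  then show ?thesis using pow_eq_id assms by simp
qed

lemma (in group) conj_pow:
  assumes "g \<in> carrier G" "x \<in> carrier G"
  shows "((\<lambda>z. g \<otimes> z \<otimes> inv g) ^^ n) x = g [^] n \<otimes> x \<otimes> inv (g [^] n)"
proof (induction n)
  case 0 then show ?case using assms by simp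
next
  case (Suc n)
  have "((\<lambda>z. g \<otimes> z \<otimes> inv g) ^^ Suc n) x = g \<otimes> (g [^] n \<otimes> x \<otimes> inv (g [^] n)) \<otimes> inv g"
    using Suc by simp
  also have "\<dots> = (g \<otimes> g [^] n) \<otimes> x \<otimes> (inv (g [^] n) \<otimes> inv g)"
    using assms by (simp add: m_assoc)
  also have "\<dots> = g [^] Suc n \<otimes> x \<otimes> inv (g [^] Suc n)"
    using assms by (simp only: nat_pow_Suc2[OF assms(1)] inv_mult_group[OF assms(1) nat_pow_closed[OF assms(1)]])
  finally show ?case .
qed


lemma (in group) fix_lemma:
  assumes fin: "finite (carrier G)" and S: "S \<lhd> G" and cS: "card S = s ^ j"
    and s: "Factorial_Ring.prime s" and t: "Factorial_Ring.prime t" and st: "s \<noteq> t"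
    and y: "y \<in> carrier G" and oy: "ord y = t"
  shows "t dvd s ^ j - 1 \<or> (\<exists>w\<in>carrier G. s * t dvd ord w)"
proof -
  interpret N: normal S G using S .
  have Ssub: "S \<subseteq> carrier G" using N.subset .
  have finS: "finite S" using fin Ssub finite_subset by blast
  have Sg: "subgroup S G" using N.subgroup_axioms .
  show ?thesis
  proof (cases "\<exists>z\<in>S - {\<one>}. y \<otimes> z \<otimes> inv y = z")
    case False
    define f where "f = (\<lambda>z. y \<otimes> z \<otimes> inv y)"
    have fS: "f ` (S - {\<one>}) \<subseteq> S - {\<one>}"
    proof
      fix u assume "u \<in> f ` (S - {\<one>})"
      then obtain z where z: "z \<in> S" "z \<noteq> \<one>" "u = f z" by blast
      have zc: "z \<in> carrier G" using z(1) Ssub by blast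
      have "f z \<in> S" unfolding f_def using N.inv_op_closed2[OF y z(1)] .
      moreover have "f z \<noteq> \<one>"
      proof
        assume "f z = \<one>"
        then have "inv y \<otimes> (y \<otimes> z \<otimes> inv y) \<otimes> y = inv y \<otimes> y" unfolding f_def using y by simp
        then have "inv y \<otimes> (y \<otimes> z) = \<one>" using y zc by (simp add: m_assoc)
        then have "z = \<one>" using y zc by (metis l_inv l_one m_assoc inv_closed)
        then show False using z(2) by simp
      qed
      ultimately show "u \<in> S - {\<one>}" using z(3) by auto
    qed
    have fq: "\<forall>z\<in>S - {\<one>}. (f ^^ t) z = z"
    proof
      fix z assume "z \<in> S - {\<one>}"
      then have zc: "z \<in> carrier G" using Ssub by blast
      show "(f ^^ t) z = z" unfolding f_def using conj_pow[OF y zc, of t] pow_ord_eq_1[OF y] oy y zc by simp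
    qed
    have nf: "\<forall>z\<in>S - {\<one>}. f z \<noteq> z" using False unfolding f_def by blast
    have "t dvd card (S - {\<one>})"
      using fixpt_count[OF _ fS t fq nf] finS by blast
    moreover have "card (S - {\<one>}) = s ^ j - 1"
      using cS finS N.one_closed by simp
    ultimately show ?thesis by simp
  next
    case True
    then obtain z where z: "z \<in> S" "z \<noteq> \<one>" "y \<otimes> z \<otimes> inv y = z" by blast
    have zc: "z \<in> carrier G" using z(1) Ssub by blast
    have "y \<otimes> z = y \<otimes> z \<otimes> inv y \<otimes> y" using y zc by (simp add: m_assoc)
    then have comm: "z \<otimes> y = y \<otimes> z" using z(3) by simp
    have "ord z dvd s ^ j" using ord_dvd_card_sub[OF Sg finS z(1)] cS by simp
    then obtain i where i: "i \<le> j" "ord z = s ^ i" using divides_primepow_nat[OF s] by blast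
    have "ord z \<noteq> 1" using ord_eq_1[OF zc] z(2) by simp
    then have i0: "i \<noteq> 0" using i by auto
    define w where "w = z \<otimes> y"
    have wc: "w \<in> carrier G" unfolding w_def using zc y by simp
    have ts: "\<not> t dvd s ^ i"
      using prime_dvd_power[OF t] primes_dvd_imp_eq[OF t s] st by blast
    have "coprime t (s ^ i)" using prime_imp_coprime[OF t ts] .
    then have g1: "gcd t (s ^ i) = 1" by simp
    have "w [^] ord z = z [^] ord z \<otimes> y [^] ord z"
      unfolding w_def using pow_mult_distrib[OF comm zc y] .
    also have "\<dots> = y [^] ord z" using zc y by simp
    finally have "ord (w [^] ord z) = ord (y [^] ord z)" by simp
    also have "\<dots> = t" using ord_pow_gen[OF y, of "ord z"] oy i g1 s prime_gt_0_nat by auto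
    finally have tw: "t dvd ord w" using ord_pow_dvd[OF wc, of "ord z"] by simp
    have "w [^] t = z [^] t \<otimes> y [^] t"
      unfolding w_def using pow_mult_distrib[OF comm zc y] .
    also have "\<dots> = z [^] t" using zc y oy pow_ord_eq_1[OF y] by simp
    finally have "ord (w [^] t) = ord (z [^] t)" by simp
    also have "\<dots> = s ^ i" using ord_pow_gen[OF zc, of t] i g1 t prime_gt_0_nat by (simp add: gcd.commute)
    finally have "s ^ i dvd ord w" using ord_pow_dvd[OF wc, of t] by simp
    then have sw: "s dvd ord w" using i0 by (meson dvd_power dvd_trans neq0_conv)
    have "s * t dvd ord w" using divides_mult[OF sw tw primes_coprime[OF s t st]] .
    then show ?thesis using wc by blast
  qed
qed


lemma pow_only_prime:
  fixes n r :: nat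
  assumes r: "Factorial_Ring.prime r" and "n > 0" and "\<forall>p. Factorial_Ring.prime p \<and> p dvd n \<longrightarrow> p = r"
  shows "n = r ^ multiplicity r n"
proof -
  have nz: "n \<noteq> 0" using assms(2) by simp
  have nu: "\<not> is_unit r" using r not_prime_unit by blast
  obtain m where m: "n = r ^ multiplicity r n * m" "\<not> r dvd m"
    using multiplicity_decompose'[OF nz nu] by blast
  have "m = 1"
  proof (rule ccontr)
    assume "m \<noteq> 1"
    then obtain p where p: "Factorial_Ring.prime p" "p dvd m" using prime_factor_nat by blast
    have "m dvd n" by (subst m(1)) (rule dvd_triv_right)
    then have "p dvd n" using p(2) dvd_trans by blast
    then have "p = r" using assms(3) p(1) by blast
    then show False using p(2) m(2) by simp
  qed
  then show ?thesis using m(1) by simp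
qed

lemma (in group) inv_cancel_left:
  "g \<in> carrier G \<Longrightarrow> w \<in> carrier G \<Longrightarrow> inv g \<otimes> (g \<otimes> w) = w"
  by (simp add: m_assoc[symmetric])

lemma (in group) conj_pow2:
  assumes "g \<in> carrier G" "x \<in> carrier G"
  shows "(g \<otimes> x \<otimes> inv g) [^] (n::nat) = g \<otimes> x [^] n \<otimes> inv g"
proof (induction n)
  case 0 then show ?case using assms by simp
next
  case (Suc n)
  have "(g \<otimes> x \<otimes> inv g) [^] Suc n = (g \<otimes> x [^] n \<otimes> inv g) \<otimes> (g \<otimes> x \<otimes> inv g)"
    using Suc by simp
  also have "\<dots> = g \<otimes> (x [^] n \<otimes> x) \<otimes> inv g"
    using assms by (simp add: m_assoc inv_cancel_left)
  also have "\<dots> = g \<otimes> x [^] Suc n \<otimes> inv g" using assms by simp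
  finally show ?case .
qed

lemma (in group) last_derived:
  assumes M: "M \<lhd> G" and der: "(derived G ^^ n) M = {\<one>}" and nt: "M \<noteq> {\<one>}"
  shows "\<exists>B. B \<lhd> G \<and> B \<subseteq> M \<and> B \<noteq> {\<one>} \<and> (\<forall>a\<in>B. \<forall>b\<in>B. a \<otimes> b = b \<otimes> a)"
proof -
  define D where "D k = (derived G ^^ k) M" for k
  have Dn: "D k \<lhd> G" for k
  proof (induction k)
    case 0 then show ?case using M by (simp add: D_def)
  next
    case (Suc k)
    have "D (Suc k) = derived G (D k)" by (simp add: D_def)
    then show ?case using derived_is_normal[OF Suc] by simp
  qed
  have DM: "D k \<subseteq> M" for k
  proof (induction k)
    case 0 then show ?case by (simp add: D_def)
  next
    case (Suc k)
    have "D (Suc k) = derived G (D k)" by (simp add: D_def)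
    also have "\<dots> \<subseteq> D k" using derived_incl[OF order_refl normal_imp_subgroup[OF Dn]] .
    finally show ?case using Suc by (rule order_trans)
  qed
  define n0 where "n0 = (LEAST k. D k = {\<one>})"
  have ex: "D n = {\<one>}" using der by (simp add: D_def)
  have n0: "D n0 = {\<one>}" unfolding n0_def using LeastI[of "\<lambda>k. D k = {\<one>}", OF ex] .
  have "n0 \<noteq> 0"
  proof
    assume "n0 = 0"
    then have "D 0 = {\<one>}" using n0 by simp
    then show False using nt by (simp add: D_def)
  qed
  then obtain k where k: "n0 = Suc k" using not0_implies_Suc by blast
  have "k < n0" using k by simp
  then have Dk: "D k \<noteq> {\<one>}" unfolding n0_def by (rule not_less_Least)
  have DSk: "derived G (D k) = {\<one>}" using n0 k by (simp add: D_def)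
  have comm: "\<forall>a\<in>D k. \<forall>b\<in>D k. a \<otimes> b = b \<otimes> a"
  proof (intro ballI)
    fix a b assume a: "a \<in> D k" and b: "b \<in> D k"
    have sg: "subgroup (D k) G" using normal_imp_subgroup[OF Dn] .
    have ac: "a \<in> carrier G" using subgroup.mem_carrier[OF sg a] .
    have bc: "b \<in> carrier G" using subgroup.mem_carrier[OF sg b] .
    have "a \<otimes> b \<otimes> inv a \<otimes> inv b \<in> derived_set G (D k)"
      using a b by blast
    then have "a \<otimes> b \<otimes> inv a \<otimes> inv b \<in> derived G (D k)"
      unfolding derived_def by (rule generate.incl)
    then have e: "a \<otimes> b \<otimes> inv a \<otimes> inv b = \<one>" using DSk by simp
    have "a \<otimes> b = (a \<otimes> b \<otimes> inv a \<otimes> inv b) \<otimes> b \<otimes> a"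
      using ac bc by (simp add: m_assoc inv_cancel_left)
    then show "a \<otimes> b = b \<otimes> a" using e ac bc by simp
  qed
  show ?thesis using Dn[of k] DM[of k] Dk comm by blast
qed


lemma (in group) subgroup_pow_closed:
  assumes "subgroup H G" "h \<in> H"
  shows "h [^] (n::nat) \<in> H"
proof (induction n)
  case 0 then show ?case using subgroup.one_closed[OF assms(1)] by simp
next
  case (Suc n) then show ?case using subgroup.m_closed[OF assms(1)] assms(2) by simp
qed

lemma (in group) section_lemma:
  assumes fin: "finite (carrier G)" and M: "M \<lhd> G" and der: "(derived G ^^ n) M = {\<one>}"
    and nt: "M \<noteq> {\<one>}"
  shows "\<exists>S r j. S \<lhd> G \<and> S \<subseteq> M \<and> Factorial_Ring.prime r \<and> j \<ge> 1 \<and> card S = r ^ j"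
proof -
  obtain B where B: "B \<lhd> G" "B \<subseteq> M" "B \<noteq> {\<one>}" and comm: "\<forall>a\<in>B. \<forall>b\<in>B. a \<otimes> b = b \<otimes> a"
    using last_derived[OF M der nt] by blast
  have Bsg: "subgroup B G" using normal_imp_subgroup[OF B(1)] .
  have "\<one> \<in> B" using subgroup.one_closed[OF Bsg] .
  then obtain b where b: "b \<in> B" "b \<noteq> \<one>" using B(3) by blast
  have bc: "b \<in> carrier G" using subgroup.mem_carrier[OF Bsg b(1)] .
  have ob: "ord b \<noteq> 1" using ord_eq_1[OF bc] b(2) by simp
  obtain r where r: "Factorial_Ring.prime r" "r dvd ord b" using prime_factor_nat[OF ob] by blast
  define S where "S = {x\<in>B. \<exists>e. x [^] (r ^ e) = \<one>}"
  have SB: "S \<subseteq> B" unfolding S_def by blast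
  have Ssub: "S \<subseteq> carrier G" using SB subgroup.subset[OF Bsg] by blast
  have finS: "finite S" using Ssub fin finite_subset by blast
  have oneS: "\<one> \<in> S" unfolding S_def using subgroup.one_closed[OF Bsg] by auto
  have Ssg: "subgroup S G"
  proof (rule subgroupI)
    show "S \<subseteq> carrier G" using Ssub .
    show "S \<noteq> {}" using oneS by blast
  next
    fix a assume a: "a \<in> S"
    then obtain e where e: "a \<in> B" "a [^] (r ^ e) = \<one>" unfolding S_def by blast
    have ac: "a \<in> carrier G" using subgroup.mem_carrier[OF Bsg e(1)] .
    have "inv a \<in> B" using subgroup.m_inv_closed[OF Bsg e(1)] .
    moreover have "inv a [^] (r ^ e) = \<one>" using nat_pow_inv[OF ac] e(2) by simp
    ultimately show "inv a \<in> S" unfolding S_def by blast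
  next
    fix a c assume a: "a \<in> S" and c: "c \<in> S"
    then obtain e1 e2 where e: "a \<in> B" "a [^] (r ^ e1) = \<one>" "c \<in> B" "c [^] (r ^ e2) = \<one>"
      unfolding S_def by blast
    have ac: "a \<in> carrier G" using subgroup.mem_carrier[OF Bsg e(1)] .
    have cc: "c \<in> carrier G" using subgroup.mem_carrier[OF Bsg e(3)] .
    have ca: "a \<otimes> c = c \<otimes> a" using comm e(1,3) by blast
    have "a [^] (r ^ (e1 + e2)) = (a [^] (r ^ e1)) [^] (r ^ e2)"
      using ac by (simp add: nat_pow_pow power_add)
    then have pa: "a [^] (r ^ (e1 + e2)) = \<one>" using e(2) by simp
    have "c [^] (r ^ (e1 + e2)) = (c [^] (r ^ e2)) [^] (r ^ e1)"
      using cc by (simp add: nat_pow_pow power_add mult.commute)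
    then have pc: "c [^] (r ^ (e1 + e2)) = \<one>" using e(4) by simp
    have "(a \<otimes> c) [^] (r ^ (e1 + e2)) = \<one>"
      using pow_mult_distrib[OF ca ac cc] pa pc by simp
    moreover have "a \<otimes> c \<in> B" using subgroup.m_closed[OF Bsg e(1,3)] .
    ultimately show "a \<otimes> c \<in> S" unfolding S_def by blast
  qed
  have Sn: "S \<lhd> G"
    unfolding normal_inv_iff
  proof (intro conjI ballI)
    show "subgroup S G" using Ssg .
  next
    fix x h assume x: "x \<in> carrier G" and h: "h \<in> S"
    then obtain e where e: "h \<in> B" "h [^] (r ^ e) = \<one>" unfolding S_def by blast
    have hc: "h \<in> carrier G" using subgroup.mem_carrier[OF Bsg e(1)] .
    have "x \<otimes> h \<otimes> inv x \<in> B" using normal.inv_op_closed2[OF B(1) x e(1)] .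
    moreover have "(x \<otimes> h \<otimes> inv x) [^] (r ^ e) = \<one>"
      using conj_pow2[OF x hc] e(2) x by simp
    ultimately show "x \<otimes> h \<otimes> inv x \<in> S" unfolding S_def by blast
  qed
  have ob1: "ord b \<ge> 1" using ord_ge_1[OF fin bc] .
  obtain c where c: "ord b = r * c" using r(2) by blast
  have c0: "c \<noteq> 0" using c ob1 by auto
  have r0: "r \<noteq> 0" using r(1) by auto
  define b' where "b' = b [^] c"
  have ob': "ord b' = r"
    unfolding b'_def using ord_pow[OF bc, of c] c c0 r0 by simp
  have b'c: "b' \<in> carrier G" unfolding b'_def using bc by simp
  have b'1: "b' \<noteq> \<one>" using ob' ord_eq_1[OF b'c] r(1) by auto
  have "b' [^] (r ^ 1) = \<one>" using pow_ord_eq_1[OF b'c] ob' by simp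
  moreover have "b' \<in> B" unfolding b'_def using subgroup_pow_closed[OF Bsg b(1)] .
  ultimately have b'S: "b' \<in> S" unfolding S_def by blast
  have onlyr: "\<forall>s. Factorial_Ring.prime s \<and> s dvd card S \<longrightarrow> s = r"
  proof (intro allI impI)
    fix s assume s: "Factorial_Ring.prime s \<and> s dvd card S"
    interpret SG: group "G\<lparr>carrier := S\<rparr>" using subgroup_imp_group[OF Ssg] .
    obtain z where z: "z \<in> S" "SG.ord z = s"
      using SG.cauchy_elem[of s] s finS by (auto simp: order_def)
    have zc: "z \<in> carrier G" using Ssub z(1) by blast
    have oz: "ord z = s" using z(2) ord_sub[OF Ssg] by simp
    obtain e where e: "z [^] (r ^ e) = \<one>" using z(1) unfolding S_def by blast
    have "s dvd r ^ e" using e pow_eq_id[OF zc] oz by simp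
    then have "s dvd r" using prime_dvd_power s by blast
    then show "s = r" using primes_dvd_imp_eq s r(1) by blast
  qed
  have cpos: "card S > 0" using finS oneS card_gt_0_iff by blast
  have cS: "card S = r ^ multiplicity r (card S)" using pow_only_prime[OF r(1) cpos onlyr] .
  have "card {\<one>, b'} \<le> card S" using card_mono[OF finS] oneS b'S by simp
  then have "card S \<ge> 2" using b'1 by simp
  then have "multiplicity r (card S) \<noteq> 0"
  proof -
    assume c2: "card S \<ge> 2"
    show ?thesis
    proof
      assume "multiplicity r (card S) = 0"
      then have "card S = 1" using cS by (metis power_0)
      then show False using c2 by simp
    qed
  qed
  then have "multiplicity r (card S) \<ge> 1" by simp
  then show ?thesis using Sn SB B(2) r(1) cS by blast
qed


lemma (in normal) pi_hom: "group_hom G (G Mod H) (\<lambda>x. H #> x)"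
  unfolding group_hom_def group_hom_axioms_def
  using factorgroup_is_group r_coset_hom_Mod is_group by blast

lemma (in normal) pi_surj: "(\<lambda>x. H #> x) ` carrier G = carrier (G Mod H)"
  by (simp add: carrier_FactGroup)

lemma (in normal) card_quot:
  assumes fin: "finite (carrier G)" and U: "subgroup U G" and HU: "H \<subseteq> U"
  shows "card U = card ((\<lambda>x. H #> x) ` U) * card H"
proof -
  interpret UG: group "G\<lparr>carrier := U\<rparr>" using subgroup_imp_group[OF U] .
  have Hs: "subgroup H (G\<lparr>carrier := U\<rparr>)"
    using subgroup_incl[OF subgroup_axioms U HU] .
  have "card (rcosets\<^bsub>G\<lparr>carrier := U\<rparr>\<^esub> H) * card H = order (G\<lparr>carrier := U\<rparr>)"
    using UG.lagrange[OF Hs] .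
  moreover have "rcosets\<^bsub>G\<lparr>carrier := U\<rparr>\<^esub> H = (\<lambda>x. H #> x) ` U"
    by (auto simp: RCOSETS_def r_coset_def)
  ultimately show ?thesis by (simp add: order_def)
qed

lemma (in normal) pi_ord_dvd:
  assumes "x \<in> carrier G"
  shows "group.ord (G Mod H) (H #> x) dvd ord x"
proof -
  interpret Q: group "G Mod H" using factorgroup_is_group .
  interpret h: group_hom G "G Mod H" "\<lambda>x. H #> x" using pi_hom .
  have "(H #> x) [^]\<^bsub>G Mod H\<^esub> ord x = H #> (x [^] ord x)"
    using h.hom_nat_pow[OF assms] by simp
  also have "\<dots> = \<one>\<^bsub>G Mod H\<^esub>" using assms coset_join2[OF one_closed subgroup_axioms] by simp
  finally show ?thesis using Q.pow_eq_id assms h.hom_closed by blast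
qed

lemma (in normal) preimage_normal:
  assumes S: "S \<lhd> G Mod H"
  shows "{x \<in> carrier G. H #> x \<in> S} \<lhd> G"
    and "(\<lambda>x. H #> x) ` {x \<in> carrier G. H #> x \<in> S} = S"
    and "H \<subseteq> {x \<in> carrier G. H #> x \<in> S}"
proof -
  have Ssg: "subgroup S (G Mod H)" using normal_imp_subgroup[OF S] .
  show "{x \<in> carrier G. H #> x \<in> S} \<lhd> G"
    using factgroup_subgroup_union_normal[OF S] factgroup_subgroup_union_char[OF Ssg] by simp
  show "(\<lambda>x. H #> x) ` {x \<in> carrier G. H #> x \<in> S} = S"
  proof
    show "(\<lambda>x. H #> x) ` {x \<in> carrier G. H #> x \<in> S} \<subseteq> S" by blast
    show "S \<subseteq> (\<lambda>x. H #> x) ` {x \<in> carrier G. H #> x \<in> S}"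
    proof
      fix s assume s: "s \<in> S"
      then have "s \<in> carrier (G Mod H)" using subgroup.subset[OF Ssg] by blast
      then obtain x where "x \<in> carrier G" "s = H #> x" using pi_surj by blast
      then show "s \<in> (\<lambda>x. H #> x) ` {x \<in> carrier G. H #> x \<in> S}" using s by blast
    qed
  qed
  show "H \<subseteq> {x \<in> carrier G. H #> x \<in> S}"
  proof
    fix n assume n: "n \<in> H"
    have nc: "n \<in> carrier G" using n subset by blast
    have "H #> n = H" using coset_join2[OF nc subgroup_axioms n] .
    then have "H #> n = \<one>\<^bsub>G Mod H\<^esub>" by simp
    then show "n \<in> {x \<in> carrier G. H #> x \<in> S}" using nc subgroup.one_closed[OF Ssg] by simp
  qed
qed

lemma (in normal) coset_eq_mem:
  assumes K: "subgroup K G" and HK: "H \<subseteq> K" and k: "k \<in> K" and x: "x \<in> carrier G"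
    and eq: "H #> x = H #> k"
  shows "x \<in> K"
proof -
  have "x \<in> H #> x" using rcos_self[OF x subgroup_axioms] .
  then have "x \<in> H #> k" using eq by simp
  then obtain n where n: "n \<in> H" "x = n \<otimes> k" unfolding r_coset_def by blast
  then show ?thesis using subgroup.m_closed[OF K] HK k by blast
qed


lemma num_step:
  fixes p q a j :: nat
  assumes q: "q \<ge> 1" and h1: "p dvd q ^ j - 1" and h2: "p dvd q ^ a - 1"
  shows "p dvd q ^ (a + j) - 1"
proof -
  define XX where "XX = q ^ a"
  define YY where "YY = q ^ j"
  have XX1: "XX \<ge> 1" unfolding XX_def using q by simp
  have YY1: "YY \<ge> 1" unfolding YY_def using q by simp
  have XY: "XX * YY \<ge> XX" using YY1 by simp
  have m: "XX * (YY - 1) = XX * YY - XX" by (simp add: diff_mult_distrib2)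
  have e: "q ^ (a + j) - 1 = XX * (YY - 1) + (XX - 1)"
    unfolding XX_def[symmetric] YY_def[symmetric] power_add[of q a j] using m XY XX1 by simp
  show ?thesis unfolding e using h1 h2 unfolding XX_def YY_def by simp
qed

lemma main_ind:
  fixes G :: "('a, 'b) monoid_scheme" and K :: "'a set"
  assumes grp: "group G" and fin: "finite (carrier G)" and K: "K \<lhd> G"
    and der: "(derived G ^^ nK) K = {\<one>\<^bsub>G\<^esub>}"
    and p: "Factorial_Ring.prime p" and q: "Factorial_Ring.prime q" and pq: "p \<noteq> q"
    and H2: "\<forall>k. 1 \<le> k \<and> k \<le> multiplicity p (card (carrier G)) \<longrightarrow> \<not> q dvd p ^ k - 1"
  shows "N \<lhd> G \<Longrightarrow> N \<subseteq> K \<Longrightarrow> p dvd card K div card N \<Longrightarrow>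
    \<not> p dvd q ^ multiplicity q (card (carrier G) div card N) - 1 \<Longrightarrow>
    \<exists>g\<in>carrier G. p * q dvd group.ord G g"
proof (induction "card (carrier G) - card N" arbitrary: N rule: less_induct)
  case less
  interpret group G using grp .
  interpret Nn: normal N G using less.prems(1) .
  define pr where "pr = (\<lambda>x. N #>\<^bsub>G\<^esub> x)"
  define Q where "Q = G Mod N"
  interpret Q: group Q unfolding Q_def using Nn.factorgroup_is_group .
  interpret h: group_hom G Q pr unfolding Q_def pr_def using Nn.pi_hom .
  have surj: "pr ` carrier G = carrier Q" unfolding Q_def pr_def using Nn.pi_surj .
  have Ksg: "subgroup K G" using normal_imp_subgroup[OF K] .
  have Ksub: "K \<subseteq> carrier G" using subgroup.subset[OF Ksg] .
  have finN: "finite N" using Nn.subset fin finite_subset by blast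
  have cN: "card N > 0" using finN Nn.one_closed card_gt_0_iff by blast
  define M where "M = pr ` K"
  have cK: "card K = card M * card N"
    unfolding M_def pr_def using Nn.card_quot[OF fin Ksg less.prems(2)] .
  have cG: "card (carrier G) = card (carrier Q) * card N"
    using Nn.card_quot[OF fin subgroup_self Nn.subset] surj unfolding pr_def by simp
  have kM: "card K div card N = card M" using cK cN by simp
  have gQ: "card (carrier G) div card N = card (carrier Q)" using cG cN by simp
  have pM: "p dvd card M" using less.prems(3) kM by simp
  have nq: "\<not> p dvd q ^ multiplicity q (card (carrier Q)) - 1" using less.prems(4) gQ by simp
  have Mn: "M \<lhd> Q"
    unfolding M_def using normal.surj_hom_normal_subgroup[OF K h.group_hom_axioms surj] .
  have "(derived Q ^^ nK) M = pr ` ((derived G ^^ nK) K)"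
    unfolding M_def using h.exp_of_derived_img[OF Ksub] .
  also have "\<dots> = {\<one>\<^bsub>Q\<^esub>}" using der h.hom_one by simp
  finally have derM: "(derived Q ^^ nK) M = {\<one>\<^bsub>Q\<^esub>}" .
  have Mnt: "M \<noteq> {\<one>\<^bsub>Q\<^esub>}"
  proof
    assume "M = {\<one>\<^bsub>Q\<^esub>}"
    then have "card M = 1" by simp
    then show False using pM p by simp
  qed
  have finQ: "finite (carrier Q)" using surj fin finite_imageI by metis
  obtain S r j where S: "S \<lhd> Q" "S \<subseteq> M" "Factorial_Ring.prime r" "j \<ge> 1" "card S = r ^ j"
    using Q.section_lemma[OF finQ Mn derM Mnt] by blast
  define A where "A = {x \<in> carrier G. pr x \<in> S}"
  have SQ: "S \<lhd> G Mod N" using S(1) unfolding Q_def .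
  have An: "A \<lhd> G" unfolding A_def pr_def using Nn.preimage_normal(1)[OF SQ] .
  have piA: "pr ` A = S" unfolding A_def pr_def using Nn.preimage_normal(2)[OF SQ] .
  have NA: "N \<subseteq> A" unfolding A_def pr_def using Nn.preimage_normal(3)[OF SQ] .
  have Asg: "subgroup A G" using normal_imp_subgroup[OF An] .
  have AK: "A \<subseteq> K"
  proof
    fix x assume x: "x \<in> A"
    then have xc: "x \<in> carrier G" and "pr x \<in> M" using S(2) unfolding A_def by auto
    then obtain k where k: "k \<in> K" "pr x = pr k" unfolding M_def by blast
    show "x \<in> K" using Nn.coset_eq_mem[OF Ksg less.prems(2) k(1) xc] k(2) unfolding pr_def by simp
  qed
  have cA: "card A = r ^ j * card N"
    using Nn.card_quot[OF fin Asg NA] piA S(5) unfolding pr_def by simp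
  define kA where "kA = card ((\<lambda>x. A #>\<^bsub>G\<^esub> x) ` K)"
  define gA where "gA = card ((\<lambda>x. A #>\<^bsub>G\<^esub> x) ` carrier G)"
  have cK2: "card K = kA * card A" unfolding kA_def using normal.card_quot[OF An fin Ksg AK] .
  have cG2: "card (carrier G) = gA * card A"
    unfolding gA_def using normal.card_quot[OF An fin subgroup_self subgroup.subset[OF Asg]] .
  have cApos: "card A > 0" using cA cN S(3) by (simp add: prime_gt_0_nat)
  have kAd: "card K div card A = kA" using cK2 cApos by simp
  have gAd: "card (carrier G) div card A = gA" using cG2 cApos by simp
  have MkA: "card M = kA * r ^ j" using cK cK2 cA cN by (simp add: mult.assoc)
  have QgA: "card (carrier Q) = gA * r ^ j" using cG cG2 cA cN by (simp add: mult.assoc)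
  have "r > 1" using prime_gt_1_nat[OF S(3)] .
  moreover have "j > 0" using S(4) by simp
  ultimately have r1: "r ^ j > 1" by (rule one_less_power)
  have NlA: "card N < card A" using cA cN r1 by simp
  have AG: "card A \<le> card (carrier G)" using card_mono[OF fin subgroup.subset[OF Asg]] .
  have meas: "card (carrier G) - card A < card (carrier G) - card N" using NlA AG by simp
  have "card (carrier G) > 0" using fin one_closed card_gt_0_iff by blast
  then have cQpos: "card (carrier Q) > 0" using cG by (cases "card (carrier Q) = 0") auto
  have gA0: "gA \<noteq> 0" using QgA cQpos by auto
  have qQ: "q dvd card (carrier Q)"
  proof (rule ccontr)
    assume "\<not> q dvd card (carrier Q)"
    then have "multiplicity q (card (carrier Q)) = 0" by (rule not_dvd_imp_multiplicity_0)
    then show False using nq by simp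
  qed
  have lift: "\<exists>g\<in>carrier G. p * q dvd ord g" if w: "w \<in> carrier Q" "p * q dvd Q.ord w" for w
  proof -
    obtain g where g: "g \<in> carrier G" "w = pr g" using w(1) surj by blast
    have "Q.ord w dvd ord g" using Nn.pi_ord_dvd[OF g(1)] g(2) unfolding Q_def pr_def by simp
    then show ?thesis using w(2) g(1) dvd_trans by blast
  qed
  consider (rp) "r = p" | (rq) "r = q" | (ro) "r \<noteq> p" "r \<noteq> q" by blast
  then show ?case
  proof cases
    case rp
    obtain y where y: "y \<in> carrier Q" "Q.ord y = q"
      using Q.cauchy_elem[OF finQ q] qQ by (auto simp: order_def)
    have rq': "r \<noteq> q" using rp pq by simp
    from Q.fix_lemma[OF finQ S(1) S(5) S(3) q rq' y(1) y(2)]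
    show ?thesis
    proof
      assume "q dvd r ^ j - 1"
      moreover have "j \<le> multiplicity p (card (carrier G))"
      proof -
        have "p ^ j dvd card (carrier G)" using cG QgA rp by simp
        moreover have "card (carrier G) \<noteq> 0" using cG cQpos cN by simp
        moreover have "\<not> is_unit p" using p not_prime_unit by blast
        ultimately show ?thesis using multiplicity_geI by blast
      qed
      ultimately show ?thesis using H2 S(4) rp by blast
    next
      assume "\<exists>w\<in>carrier Q. r * q dvd Q.ord w"
      then show ?thesis using lift rp by blast
    qed
  next
    case rq
    have "card M dvd card (carrier Q)"
      using Q.lagrange[OF normal_imp_subgroup[OF Mn]] unfolding order_def by (metis dvd_triv_right)
    then have pQ: "p dvd card (carrier Q)" using pM dvd_trans by blast
    obtain x where x: "x \<in> carrier Q" "Q.ord x = p"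
      using Q.cauchy_elem[OF finQ p] pQ by (auto simp: order_def)
    have qp: "r \<noteq> p" using rq pq by simp
    have q1: "q \<ge> 1" using prime_gt_0_nat[OF q] by simp
    from Q.fix_lemma[OF finQ S(1) S(5) S(3) p qp x(1) x(2)]
    show ?thesis
    proof
      assume pj: "p dvd r ^ j - 1"
      have npr: "\<not> p dvd r ^ j"
      proof
        assume "p dvd r ^ j"
        then have "p dvd r" using prime_dvd_power p by blast
        then show False using primes_dvd_imp_eq[OF p S(3)] qp by simp
      qed
      have pkA: "p dvd card K div card A"
        using pM MkA npr prime_dvd_mult_iff[OF p] kAd by auto
      have "multiplicity q (card (carrier Q)) = multiplicity q gA + j"
        using QgA rq gA0 q prime_elem_multiplicity_mult_distrib[of q gA "q ^ j"]
        by (simp add: prime_imp_prime_elem)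
      then have "\<not> p dvd q ^ (multiplicity q gA + j) - 1" using nq by simp
      then have "\<not> p dvd q ^ multiplicity q gA - 1"
        using num_step[OF q1, of p j "multiplicity q gA"] pj rq by blast
      then have nqA: "\<not> p dvd q ^ multiplicity q (card (carrier G) div card A) - 1" using gAd by simp
      show ?thesis using less.hyps[OF meas An AK pkA nqA] .
    next
      assume "\<exists>w\<in>carrier Q. r * p dvd Q.ord w"
      then show ?thesis using lift rq by (metis mult.commute)
    qed
  next
    case ro
    have npr: "\<not> p dvd r ^ j"
    proof
      assume "p dvd r ^ j"
      then have "p dvd r" using prime_dvd_power p by blast
      then show False using primes_dvd_imp_eq[OF p S(3)] ro by simp
    qed
    have nqr: "\<not> q dvd r ^ j"
    proof
      assume "q dvd r ^ j"
      then have "q dvd r" using prime_dvd_power q by blast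
      then show False using primes_dvd_imp_eq[OF q S(3)] ro by simp
    qed
    have pkA: "p dvd card K div card A"
      using pM MkA npr prime_dvd_mult_iff[OF p] kAd by auto
    have "multiplicity q (card (carrier Q)) = multiplicity q gA + multiplicity q (r ^ j)"
      using QgA gA0 q prime_elem_multiplicity_mult_distrib[of q gA "r ^ j"] S(3)
      by (simp add: prime_imp_prime_elem prime_gt_0_nat)
    also have "multiplicity q (r ^ j) = 0" using nqr by (rule not_dvd_imp_multiplicity_0)
    finally have "multiplicity q (card (carrier Q)) = multiplicity q gA" by simp
    then have nqA: "\<not> p dvd q ^ multiplicity q (card (carrier G) div card A) - 1" using gAd nq by simp
    show ?thesis using less.hyps[OF meas An AK pkA nqA] .
  qed
qed


lemma cong_gcd_exp:
  fixes a n m k :: nat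
  assumes h1: "[a ^ m = 1] (mod n)" and h2: "[a ^ k = 1] (mod n)"
  shows "[a ^ gcd m k = 1] (mod n)"
proof (cases "m = 0")
  case True then show ?thesis using h2 by simp
next
  case False
  obtain x y where xy: "m * x = k * y + gcd m k" using bezout_nat[OF False] by blast
  have e1: "[a ^ (m * x) = 1] (mod n)"
    using cong_pow[OF h1, of x] by (simp add: power_mult)
  have e2: "[a ^ (k * y) = 1] (mod n)"
    using cong_pow[OF h2, of y] by (simp add: power_mult)
  have "[a ^ (k * y) * a ^ gcd m k = 1 * a ^ gcd m k] (mod n)"
    using cong_scalar_right[OF e2] .
  then have e3: "[a ^ (m * x) = a ^ gcd m k] (mod n)" using xy by (simp add: power_add)
  show ?thesis using cong_trans[OF cong_sym[OF e3] e1] .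
qed

lemma cong_dvd_exp:
  fixes a n d e :: nat
  assumes "[a ^ d = 1] (mod n)" "d dvd e"
  shows "[a ^ e = 1] (mod n)"
proof -
  obtain c where c: "e = d * c" using assms(2) by blast
  show ?thesis using cong_pow[OF assms(1), of c] c by (simp add: power_mult)
qed

lemma H2_from_L:
  fixes p q m :: nat
  assumes p: "Factorial_Ring.prime p" and q: "Factorial_Ring.prime q" and pq: "p \<noteq> q"
    and nd: "\<not> q dvd p ^ gcd (lcm_upto m) (q - 1) - 1"
  shows "\<forall>k. 1 \<le> k \<and> k \<le> m \<longrightarrow> \<not> q dvd p ^ k - 1"
proof (intro allI impI notI)
  fix k assume k: "1 \<le> k \<and> k \<le> m" and dv: "q dvd p ^ k - 1"
  have p0: "p > 0" using prime_gt_0_nat[OF p] .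
  have p1: "p ^ k \<ge> 1" using p0 by simp
  have c1: "[p ^ k = 1] (mod q)" using cong_altdef_nat[OF p1] dv by simp
  have nqp: "\<not> q dvd p"
  proof
    assume "q dvd p"
    then have "q = p" using primes_dvd_imp_eq[OF q p] by blast
    then show False using pq by simp
  qed
  have c2: "[p ^ (q - 1) = 1] (mod q)" using fermat_theorem[OF q nqp] .
  have c3: "[p ^ gcd k (q - 1) = 1] (mod q)" using cong_gcd_exp[OF c1 c2] .
  have kd: "k dvd lcm_upto m" unfolding lcm_upto_def using k by (intro dvd_Lcm) simp
  have dd: "gcd k (q - 1) dvd gcd (lcm_upto m) (q - 1)"
    using gcd_greatest[OF dvd_trans[OF gcd_dvd1 kd] gcd_dvd2] .
  have c4: "[p ^ gcd (lcm_upto m) (q - 1) = 1] (mod q)" using cong_dvd_exp[OF c3 dd] .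
  have p2: "p ^ gcd (lcm_upto m) (q - 1) \<ge> 1" using p0 by simp
  have "q dvd p ^ gcd (lcm_upto m) (q - 1) - 1" using cong_altdef_nat[OF p2] c4 by simp
  then show False using nd by simp
qed

theorem theorem2p7:
  fixes G :: "('a, 'b) monoid_scheme" and K :: "'a set" and p :: nat
  assumes "group G" and "finite (carrier G)"
    and "K \<lhd> G" and "solvable (G\<lparr>carrier := K\<rparr>)"
    and "p \<in> prime_set G"
    and "gk_deg G p < card (L_set p G)"
  shows "p \<notin> prime_set (G\<lparr>carrier := K\<rparr>)"
proof
  assume pK: "p \<in> prime_set (G\<lparr>carrier := K\<rparr>)"
  interpret group G using assms(1) .
  have p: "Factorial_Ring.prime p" and pKd: "p dvd card K" using pK unfolding prime_set_def by auto
  have Ksg: "subgroup K G" using normal_imp_subgroup[OF assms(3)] .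
  interpret KG: group "G\<lparr>carrier := K\<rparr>" using subgroup_imp_group[OF Ksg] .
  obtain nK where nK: "(derived (G\<lparr>carrier := K\<rparr>) ^^ nK) K = {\<one>\<^bsub>G\<^esub>}"
    using assms(4) KG.solvable_iff_trivial_derived_seq by auto
  have cons: "(derived (G\<lparr>carrier := K\<rparr>) ^^ n) K = (derived G ^^ n) K \<and> (derived G ^^ n) K \<subseteq> K" for n
  proof (induction n)
    case 0 then show ?case by simp
  next
    case (Suc n)
    then have sub: "(derived G ^^ n) K \<subseteq> K" by blast
    have "(derived (G\<lparr>carrier := K\<rparr>) ^^ Suc n) K = derived (G\<lparr>carrier := K\<rparr>) ((derived G ^^ n) K)"
      using Suc by simp
    also have "\<dots> = derived G ((derived G ^^ n) K)" using derived_consistent[OF sub Ksg] .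
    finally show ?case using derived_incl[OF sub Ksg] by simp
  qed
  have der: "(derived G ^^ nK) K = {\<one>\<^bsub>G\<^esub>}" using nK cons[of nK] by simp
  have finL: "finite {q. gk_adj G p q}"
  proof -
    have "{q. gk_adj G p q} \<subseteq> {..card (carrier G)}"
    proof
      fix q assume "q \<in> {q. gk_adj G p q}"
      then have "q dvd card (carrier G)" unfolding gk_adj_def prime_set_def by auto
      moreover have "card (carrier G) > 0" using assms(2) one_closed card_gt_0_iff by blast
      ultimately show "q \<in> {..card (carrier G)}" by (simp add: dvd_imp_le)
    qed
    then show ?thesis using finite_subset by blast
  qed
  have sub: "L_set p G \<subseteq> {q. gk_adj G p q}"
  proof
    fix q assume qL: "q \<in> L_set p G"
    then have qG: "q \<in> prime_set G" and qp: "q \<noteq> p"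
      and c1: "\<not> p dvd q ^ w_exp G q - 1"
      and c2: "\<not> q dvd p ^ gcd (lcm_upto (w_exp G p)) (q - 1) - 1"
      unfolding L_set_def by auto
    have q: "Factorial_Ring.prime q" using qG unfolding prime_set_def by auto
    have pq: "p \<noteq> q" using qp by simp
    have H2: "\<forall>k. 1 \<le> k \<and> k \<le> multiplicity p (card (carrier G)) \<longrightarrow> \<not> q dvd p ^ k - 1"
      using H2_from_L[OF p q pq c2] unfolding w_exp_def .
    have "\<exists>g\<in>carrier G. p * q dvd ord g"
    proof (rule main_ind[OF assms(1,2,3) der p q pq H2])
      show "{\<one>\<^bsub>G\<^esub>} \<lhd> G" using one_is_normal .
      show "{\<one>\<^bsub>G\<^esub>} \<subseteq> K" using subgroup.one_closed[OF Ksg] by simp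
      show "p dvd card K div card {\<one>\<^bsub>G\<^esub>}" using pKd by simp
      show "\<not> p dvd q ^ multiplicity q (card (carrier G) div card {\<one>\<^bsub>G\<^esub>}) - 1"
        using c1 unfolding w_exp_def by simp
    qed
    then obtain g where g: "g \<in> carrier G" "p * q dvd ord g" by blast
    obtain c where c: "ord g = p * q * c" using g(2) by blast
    have og: "ord g \<ge> 1" using ord_ge_1[OF assms(2) g(1)] .
    have c0: "c \<noteq> 0" using c og by auto
    have "ord (g [^]\<^bsub>G\<^esub> c) = ord g div c" using ord_pow[OF g(1), of c] c c0 by simp
    also have "\<dots> = p * q" using c c0 by simp
    finally have "ord (g [^]\<^bsub>G\<^esub> c) = p * q" .
    moreover have "g [^]\<^bsub>G\<^esub> c \<in> carrier G" using g(1) by simp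
    ultimately show "q \<in> {q. gk_adj G p q}"
      unfolding gk_adj_def using assms(5) qG pq by blast
  qed
  have "card (L_set p G) \<le> gk_deg G p"
    unfolding gk_deg_def using card_mono[OF finL sub] .
  then show False using assms(6) by simp
qed


end
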